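(* Assume $\theta_i<1$ for all $i$ and $\theta_j>0$ for some $j$, and let $\zeta=n\theta_{\mathrm{ave}}-\theta_{\min}$. If $\theta_{\max}<\dfrac{n}{n+2(1+\zeta)}$, then for every $x(0)\in\Delta_n$ the trajectory of system (A) converges exponentially fast to the unique fixed point $x^*$ of $F$ in $\Delta_n$.
   Context: Let $n\ge 2$, $\mathbf 1_n$ the all-ones vector, $I_n$ the identity matrix, $\Delta_n=\{x\in\mathbb R^n: x\ge 0,\ \mathbf 1_n^Tx=1\}$. Let $C\in\mathbb R^{n\times n}$ be a nonnegative row-stochastic matrix with zero diagonal, $\theta=(\theta_1,\dots,\theta_n)\in[0,1]^n$, $\Theta=\mathrm{diag}(\theta)$, and for $x\in\mathbb R^n$, $W(x)=\mathrm{diag}(x)+(I_n-\mathrm{diag}(x))C$. Let $\theta_{\min}=\min_j\theta_j$, $\theta_{\mathrm{ave}}=\frac1n\sum_j\theta_j$, $\theta_{\max}=\max_j\theta_j$. System (A): $x(s+1)=F(x(s))$, $s=0,1,2,\dots$, $x(0)\in\Delta_n$, where $F(x)=(I_n-\Theta)(I_n-W(x)^T\Theta)^{-1}\mathbf 1_n/n$. *)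

theory Defs
  imports "HOL-Analysis.Analysis"
begin

text \<open>Vectors in R^n are modelled as real^'n for a finite index type 'n, n = CARD('n).\<close>

definition diagm :: "real^'n \<Rightarrow> real^'n^'n" where
  "diagm x = (\<chi> i j. if i = j then x $ i else 0)"

definition ones :: "real^'n" where
  "ones = (\<chi> i. 1)"

definition prob_simplex :: "(real^'n) set" where
  "prob_simplex = {x. (\<forall>i. 0 \<le> x $ i) \<and> (\<Sum>i\<in>UNIV. x $ i) = 1}"

definition row_stochastic_zero_diag :: "real^'n^'n \<Rightarrow> bool" where
  "row_stochastic_zero_diag C \<longleftrightarrow>
     (\<forall>i j. 0 \<le> C $ i $ j) \<and> (\<forall>i. (\<Sum>j\<in>UNIV. C $ i $ j) = 1) \<and> (\<forall>i. C $ i $ i = 0)"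

definition Wmat :: "real^'n^'n \<Rightarrow> real^'n \<Rightarrow> real^'n^'n" where
  "Wmat C x = diagm x + (mat 1 - diagm x) ** C"

definition Fmap :: "real^'n^'n \<Rightarrow> real^'n \<Rightarrow> real^'n \<Rightarrow> real^'n" where
  "Fmap C \<theta> x = (mat 1 - diagm \<theta>) *v
      (matrix_inv (mat 1 - transpose (Wmat C x) ** diagm \<theta>) *v ((1 / real CARD('n)) *\<^sub>R ones))"

definition theta_min :: "real^'n \<Rightarrow> real" where
  "theta_min \<theta> = Min (range (\<lambda>j. \<theta> $ j))"

definition theta_max :: "real^'n \<Rightarrow> real" where
  "theta_max \<theta> = Max (range (\<lambda>j. \<theta> $ j))"

definition theta_ave :: "real^'n \<Rightarrow> real" where
  "theta_ave \<theta> = (\<Sum>j\<in>UNIV. \<theta> $ j) / real CARD('n)"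

end

theory Submission
  imports Defs
begin

lemma ifmult: "(if P then a else 0) * (b::real) = (if P then a * b else 0)" by simp
lemma ifmult2: "(b::real) * (if P then a else 0) = (if P then b * a else 0)" by simp
lemma ifsub: "((if P then a else 0) - (if P then b else 0)) = (if P then a - b else (0::real))" by simp

lemma IDentry: "(mat 1 - diagm x) $ j $ k = (if j = k then 1 - x$j else (0::real))"
  by (simp add: mat_def diagm_def)

lemma Wmat_entry: "Wmat C x $ j $ i = (if j = i then x$j else 0) + (1 - x$j) * C$j$i"
  unfolding Wmat_def matrix_matrix_mult_def
  by (simp add: mat_def diagm_def ifsub ifmult sum.delta)

lemma Mmult: "((mat 1 - transpose (Wmat C x) ** diagm \<theta>) *v z) $ i
   = z$i - (\<Sum>j\<in>UNIV. Wmat C x $ j $ i * \<theta>$j * z$j)"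
proof -
  have e: "(mat 1 - transpose (Wmat C x) ** diagm \<theta>) $ i $ j
     = (if i = j then 1 else 0) - Wmat C x $ j $ i * \<theta>$j" for j
    unfolding matrix_matrix_mult_def transpose_def diagm_def
    by (simp add: mat_def mult.commute ifmult ifmult2 sum.delta sum.delta')
  show ?thesis unfolding matrix_vector_mult_def vec_lambda_beta e
    by (simp add: left_diff_distrib sum_subtractf ifmult sum.delta)
qed

lemma Fcomp: "((mat 1 - diagm \<theta>) *v z) $ i = (1 - \<theta>$i) * z$i"
  unfolding matrix_vector_mult_def by (simp add: mat_def diagm_def ifsub ifmult sum.delta)

lemma L0:
  fixes w :: "'n::finite \<Rightarrow> 'n \<Rightarrow> real" and th u :: "'n \<Rightarrow> real"
  assumes wnn: "\<And>j i. 0 \<le> w j i" and wsum: "\<And>j. (\<Sum>i\<in>UNIV. w j i) = 1"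
    and th: "\<And>i. 0 \<le> th i \<and> th i < 1" and unn: "\<And>i. 0 \<le> u i"
    and le: "\<And>i. u i \<le> (\<Sum>j\<in>UNIV. w j i * th j * u j)"
  shows "u i = 0"
proof -
  have "(\<Sum>i\<in>UNIV. u i) \<le> (\<Sum>i\<in>UNIV. \<Sum>j\<in>UNIV. w j i * th j * u j)"
    by (rule sum_mono) (rule le)
  also have "\<dots> = (\<Sum>j\<in>UNIV. (\<Sum>i\<in>UNIV. w j i) * (th j * u j))"
    by (subst sum.swap) (simp add: sum_distrib_right mult.assoc)
  also have "\<dots> = (\<Sum>j\<in>UNIV. th j * u j)" by (simp add: wsum)
  finally have "(\<Sum>j\<in>UNIV. (1 - th j) * u j) \<le> 0"
    by (simp add: left_diff_distrib sum_subtractf)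
  moreover have nn: "\<forall>j\<in>UNIV. 0 \<le> (1 - th j) * u j" using th unn by (simp add: less_imp_le)
  ultimately have "(\<Sum>j\<in>UNIV. (1 - th j) * u j) = 0"
    by (meson order_antisym sum_nonneg)
  hence "(1 - th i) * u i = 0" using nn by (simp add: sum_nonneg_eq_0_iff)
  thus ?thesis using th[of i] by simp
qed

lemma ybounds:
  fixes w :: "'n::finite \<Rightarrow> 'n \<Rightarrow> real" and th y :: "'n \<Rightarrow> real"
  assumes wnn: "\<And>j i. 0 \<le> w j i" and wsum: "\<And>j. (\<Sum>i\<in>UNIV. w j i) = 1"
    and th: "\<And>i. 0 \<le> th i \<and> th i < 1" and tm: "\<And>i. th i \<le> tm" "tm < 1"
    and yeq: "\<And>i. y i = b + (\<Sum>j\<in>UNIV. w j i * th j * y j)" and b: "0 < b"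
  shows "\<forall>i. 0 \<le> y i" "(\<Sum>i\<in>UNIV. (1 - th i) * y i) = real CARD('n) * b"
    "\<forall>i. th i * y i \<le> tm * (b + b * (\<Sum>i\<in>UNIV. th i) / (1 - tm))"
proof -
  have wle: "w j i \<le> 1" for j i
  proof -
    have "w j i \<le> (\<Sum>i\<in>UNIV. w j i)" by (rule member_le_sum) (auto simp: wnn)
    thus ?thesis by (simp add: wsum)
  qed
  define u where "u i = max (- y i) 0" for i
  have "u i = 0" for i
  proof (rule L0[of w th u, OF wnn wsum th])
    show "0 \<le> u i" for i by (simp add: u_def)
    show "u i \<le> (\<Sum>j\<in>UNIV. w j i * th j * u j)" for i
    proof -
      have "- y i \<le> (\<Sum>j\<in>UNIV. w j i * th j * (- y j))"
        using yeq[of i] b by (simp add: sum_negf)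
      also have "\<dots> \<le> (\<Sum>j\<in>UNIV. w j i * th j * u j)"
        by (rule sum_mono, rule mult_left_mono) (auto simp: u_def wnn th)
      finally have 1: "- y i \<le> (\<Sum>j\<in>UNIV. w j i * th j * u j)" .
      have "0 \<le> (\<Sum>j\<in>UNIV. w j i * th j * u j)"
        by (rule sum_nonneg) (simp add: u_def wnn th)
      thus ?thesis using 1 by (simp add: u_def)
    qed
  qed
  hence ynn: "\<forall>i. 0 \<le> y i"
  proof (intro allI)
    fix i assume h: "\<And>i. u i = 0"
    have "- y i \<le> u i" unfolding u_def by simp
    thus "0 \<le> y i" using h[of i] by linarith
  qed
  thus "\<forall>i. 0 \<le> y i" .
  have "(\<Sum>i\<in>UNIV. y i) = (\<Sum>i\<in>UNIV. b + (\<Sum>j\<in>UNIV. w j i * th j * y j))"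
    by (simp only: yeq[symmetric])
  also have "\<dots> = real CARD('n) * b + (\<Sum>j\<in>UNIV. (\<Sum>i\<in>UNIV. w j i) * (th j * y j))"
    by (simp add: sum.distrib, subst sum.swap) (simp add: sum_distrib_right mult.assoc)
  also have "\<dots> = real CARD('n) * b + (\<Sum>j\<in>UNIV. th j * y j)" by (simp add: wsum)
  finally show "(\<Sum>i\<in>UNIV. (1 - th i) * y i) = real CARD('n) * b"
    by (simp add: left_diff_distrib sum_subtractf)
  define S where "S = (\<Sum>j\<in>UNIV. th j * y j)"
  have "S = (\<Sum>i\<in>UNIV. th i * (b + (\<Sum>j\<in>UNIV. w j i * th j * y j)))"
    unfolding S_def by (simp only: yeq[symmetric])
  also have "\<dots> = b * (\<Sum>i\<in>UNIV. th i) + (\<Sum>j\<in>UNIV. (\<Sum>i\<in>UNIV. w j i * th i) * (th j * y j))"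
  proof -
    have "(\<Sum>i\<in>UNIV. th i * (b + (\<Sum>j\<in>UNIV. w j i * th j * y j)))
        = (\<Sum>i\<in>UNIV. b * th i) + (\<Sum>i\<in>UNIV. \<Sum>j\<in>UNIV. w j i * th i * (th j * y j))"
      by (simp add: distrib_left sum.distrib sum_distrib_left mult_ac)
    also have "\<dots> = b * (\<Sum>i\<in>UNIV. th i) + (\<Sum>j\<in>UNIV. \<Sum>i\<in>UNIV. w j i * th i * (th j * y j))"
      by (subst sum.swap) (simp add: sum_distrib_left)
    also have "\<dots> = b * (\<Sum>i\<in>UNIV. th i) + (\<Sum>j\<in>UNIV. (\<Sum>i\<in>UNIV. w j i * th i) * (th j * y j))"
      by (simp add: sum_distrib_right)
    finally show ?thesis .
  qed
  also have "\<dots> \<le> b * (\<Sum>i\<in>UNIV. th i) + (\<Sum>j\<in>UNIV. tm * (th j * y j))"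
  proof -
    have "(\<Sum>i\<in>UNIV. w j i * th i) \<le> tm" for j
    proof -
      have "(\<Sum>i\<in>UNIV. w j i * th i) \<le> (\<Sum>i\<in>UNIV. w j i * tm)"
        by (rule sum_mono, rule mult_left_mono) (auto simp: wnn tm)
      thus ?thesis by (simp add: sum_distrib_right[symmetric] wsum)
    qed
    thus ?thesis by (intro add_left_mono sum_mono mult_right_mono) (auto simp: th ynn)
  qed
  also have "\<dots> = b * (\<Sum>i\<in>UNIV. th i) + tm * S" by (simp add: S_def sum_distrib_left)
  finally have "S * (1 - tm) \<le> b * (\<Sum>i\<in>UNIV. th i)" by (simp add: algebra_simps)
  hence Sle: "S \<le> b * (\<Sum>i\<in>UNIV. th i) / (1 - tm)" using tm by (simp add: field_simps)
  show "\<forall>i. th i * y i \<le> tm * (b + b * (\<Sum>i\<in>UNIV. th i) / (1 - tm))"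
  proof
    fix i
    have "y i \<le> b + S"
    proof -
      have "(\<Sum>j\<in>UNIV. w j i * th j * y j) \<le> (\<Sum>j\<in>UNIV. th j * y j)"
      proof (rule sum_mono)
        fix j
        have "0 \<le> th j * y j" using th ynn by simp
        hence "w j i * (th j * y j) \<le> 1 * (th j * y j)"
          by (rule mult_right_mono[OF wle])
        thus "w j i * th j * y j \<le> th j * y j" by (simp add: mult.assoc)
      qed
      thus ?thesis using yeq[of i] by (simp add: S_def)
    qed
    also have "\<dots> \<le> b + b * (\<Sum>i\<in>UNIV. th i) / (1 - tm)" using Sle by simp
    finally have "y i \<le> b + b * (\<Sum>i\<in>UNIV. th i) / (1 - tm)" .
    thus "th i * y i \<le> tm * (b + b * (\<Sum>i\<in>UNIV. th i) / (1 - tm))"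
      by (meson mult_mono th tm(1) ynn order.trans)
  qed
qed


lemma diffbound:
  fixes w w' c :: "'n::finite \<Rightarrow> 'n \<Rightarrow> real" and th y y' d :: "'n \<Rightarrow> real"
  assumes wnn: "\<And>j i. 0 \<le> w j i" and wsum: "\<And>j. (\<Sum>i\<in>UNIV. w j i) = 1"
    and cnn: "\<And>j i. 0 \<le> c j i" and csum: "\<And>j. (\<Sum>i\<in>UNIV. c j i) = 1"
    and th: "\<And>i. 0 \<le> th i"
    and yeq: "\<And>i. y i = b + (\<Sum>j\<in>UNIV. w j i * th j * y j)"
    and yeq': "\<And>i. y' i = b + (\<Sum>j\<in>UNIV. w' j i * th j * y' j)"
    and wd: "\<And>j i. w j i - w' j i = (if j = i then d j else 0) - d j * c j i"
  shows "(\<Sum>i\<in>UNIV. (1 - th i) * \<bar>y i - y' i\<bar>) \<le> 2 * (\<Sum>j\<in>UNIV. \<bar>d j * th j * y' j\<bar>)"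
proof -
  define e where "e i = y i - y' i" for i
  define v where "v j = d j * th j * y' j" for j
  have eeq: "e i = (\<Sum>j\<in>UNIV. w j i * th j * e j) + (v i - (\<Sum>j\<in>UNIV. c j i * v j))" for i
  proof -
    have "e i = (\<Sum>j\<in>UNIV. w j i * th j * y j) - (\<Sum>j\<in>UNIV. w' j i * th j * y' j)"
      unfolding e_def by (subst yeq, subst yeq', simp)
    also have "\<dots> = (\<Sum>j\<in>UNIV. w j i * th j * e j + (w j i - w' j i) * th j * y' j)"
      by (simp add: e_def sum_subtractf[symmetric] algebra_simps)
    also have "\<dots> = (\<Sum>j\<in>UNIV. w j i * th j * e j) + (\<Sum>j\<in>UNIV. (if j = i then v j else 0) - c j i * v j)"
      by (subst sum.distrib[symmetric], rule sum.cong) (auto simp: wd v_def algebra_simps)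
    also have "\<dots> = (\<Sum>j\<in>UNIV. w j i * th j * e j) + (v i - (\<Sum>j\<in>UNIV. c j i * v j))"
      by (simp add: sum_subtractf)
    finally show ?thesis .
  qed
  have ebd: "\<bar>e i\<bar> \<le> (\<Sum>j\<in>UNIV. w j i * th j * \<bar>e j\<bar>) + \<bar>v i\<bar> + (\<Sum>j\<in>UNIV. c j i * \<bar>v j\<bar>)" for i
  proof -
    have 1: "\<bar>\<Sum>j\<in>UNIV. w j i * th j * e j\<bar> \<le> (\<Sum>j\<in>UNIV. w j i * th j * \<bar>e j\<bar>)"
      by (rule order.trans[OF sum_abs]) (simp add: abs_mult wnn th)
    have 2: "\<bar>\<Sum>j\<in>UNIV. c j i * v j\<bar> \<le> (\<Sum>j\<in>UNIV. c j i * \<bar>v j\<bar>)"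
      by (rule order.trans[OF sum_abs]) (simp add: abs_mult cnn)
    show ?thesis using 1 2 eeq[of i] by linarith
  qed
  have "(\<Sum>i\<in>UNIV. \<bar>e i\<bar>) \<le> (\<Sum>i\<in>UNIV. (\<Sum>j\<in>UNIV. w j i * th j * \<bar>e j\<bar>) + \<bar>v i\<bar> + (\<Sum>j\<in>UNIV. c j i * \<bar>v j\<bar>))"
    by (rule sum_mono) (rule ebd)
  also have "\<dots> = (\<Sum>j\<in>UNIV. (\<Sum>i\<in>UNIV. w j i) * (th j * \<bar>e j\<bar>)) + (\<Sum>i\<in>UNIV. \<bar>v i\<bar>)
        + (\<Sum>j\<in>UNIV. (\<Sum>i\<in>UNIV. c j i) * \<bar>v j\<bar>)"
    apply (simp only: sum.distrib)
    apply (subst (1 2) sum.swap)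
    apply (simp add: sum_distrib_right mult.assoc)
    done
  also have "\<dots> = (\<Sum>j\<in>UNIV. th j * \<bar>e j\<bar>) + 2 * (\<Sum>i\<in>UNIV. \<bar>v i\<bar>)"
    by (simp add: wsum csum)
  finally have "(\<Sum>i\<in>UNIV. (1 - th i) * \<bar>e i\<bar>) \<le> 2 * (\<Sum>i\<in>UNIV. \<bar>v i\<bar>)"
    by (simp add: left_diff_distrib sum_subtractf)
  thus ?thesis by (simp add: e_def v_def)
qed


lemma simplex_le1: "x \<in> prob_simplex \<Longrightarrow> x $ j \<le> 1"
proof -
  assume x: "x \<in> prob_simplex"
  have "x $ j \<le> (\<Sum>i\<in>UNIV. x $ i)" by (rule member_le_sum) (use x in \<open>auto simp: prob_simplex_def\<close>)
  thus ?thesis using x by (simp add: prob_simplex_def)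
qed

lemma W_props:
  assumes C: "row_stochastic_zero_diag C" and x: "x \<in> prob_simplex"
  shows "0 \<le> Wmat C x $ j $ i" "(\<Sum>i\<in>UNIV. Wmat C x $ j $ i) = 1"
proof -
  have x0: "0 \<le> x $ j" and x1: "x $ j \<le> 1" using x simplex_le1[OF x] by (auto simp: prob_simplex_def)
  show "0 \<le> Wmat C x $ j $ i" using C x0 x1 by (auto simp: Wmat_entry row_stochastic_zero_diag_def)
  have "(\<Sum>i\<in>UNIV. Wmat C x $ j $ i) = (\<Sum>i\<in>UNIV. (if j = i then x$j else 0)) + (1 - x$j) * (\<Sum>i\<in>UNIV. C$j$i)"
    by (simp add: Wmat_entry sum.distrib sum_distrib_left)
  also have "\<dots> = 1" using C by (simp add: row_stochastic_zero_diag_def)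
  finally show "(\<Sum>i\<in>UNIV. Wmat C x $ j $ i) = 1" .
qed

lemma y_eq:
  fixes C :: "real^'n^'n" and \<theta> x :: "real^'n"
  assumes C: "row_stochastic_zero_diag C" and th: "\<forall>i. 0 \<le> \<theta> $ i \<and> \<theta> $ i < 1"
    and x: "x \<in> prob_simplex"
  defines "M \<equiv> mat 1 - transpose (Wmat C x) ** diagm \<theta>"
  shows "(matrix_inv M *v ((1 / real CARD('n)) *\<^sub>R ones)) $ i
     = 1 / real CARD('n) + (\<Sum>j\<in>UNIV. Wmat C x $ j $ i * \<theta>$j * (matrix_inv M *v ((1 / real CARD('n)) *\<^sub>R ones)) $ j)"
proof -
  have inj: "\<forall>z. M *v z = 0 \<longrightarrow> z = 0"
  proof (intro allI impI)
    fix z assume Mz: "M *v z = 0"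
    have zi: "z $ i = (\<Sum>j\<in>UNIV. Wmat C x $ j $ i * \<theta>$j * z$j)" for i
      using arg_cong[OF Mz, of "\<lambda>v. v $ i"] unfolding M_def Mmult by simp
    have "\<bar>z $ i\<bar> = 0" for i
    proof (rule L0[of "\<lambda>j i. Wmat C x $ j $ i" "\<lambda>j. \<theta> $ j" "\<lambda>i. \<bar>z $ i\<bar>"])
      show "0 \<le> Wmat C x $ j $ i" for j i by (rule W_props[OF C x])
      show "(\<Sum>i\<in>UNIV. Wmat C x $ j $ i) = 1" for j by (rule W_props[OF C x])
      show "0 \<le> \<theta> $ i \<and> \<theta> $ i < 1" for i using th by simp
      show "0 \<le> \<bar>z $ i\<bar>" for i by simp
      show "\<bar>z $ i\<bar> \<le> (\<Sum>j\<in>UNIV. Wmat C x $ j $ i * \<theta> $ j * \<bar>z $ j\<bar>)" for i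
        apply (subst zi)
        apply (rule order.trans[OF sum_abs])
        apply (simp add: abs_mult W_props[OF C x] th)
        done
    qed
    thus "z = 0" by (simp add: vec_eq_iff)
  qed
  then obtain B where "B ** M = mat 1" using matrix_left_invertible_ker[of M] by blast
  hence "M ** B = mat 1" by (simp add: matrix_left_right_inverse)
  with \<open>B ** M = mat 1\<close> have "\<exists>A'. M ** A' = mat 1 \<and> A' ** M = mat 1" by blast
  hence "M ** matrix_inv M = mat 1 \<and> matrix_inv M ** M = mat 1"
    unfolding matrix_inv_def by (rule someI_ex)
  hence "M *v (matrix_inv M *v ((1 / real CARD('n)) *\<^sub>R ones)) = (1 / real CARD('n)) *\<^sub>R ones"
    by (simp add: matrix_vector_mul_assoc)
  from arg_cong[OF this, of "\<lambda>v. v $ i"] show ?thesis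
    unfolding M_def Mmult by (simp add: ones_def)
qed


lemma l1_norm: "norm (z::real^'n) \<le> (\<Sum>i\<in>UNIV. \<bar>z $ i\<bar>)" by (rule norm_le_l1_cart)

lemma norm_l1: "(\<Sum>i\<in>UNIV. \<bar>(z::real^'n) $ i\<bar>) \<le> real CARD('n) * norm z"
  using sum_bounded_above[of UNIV "\<lambda>i. \<bar>z $ i\<bar>" "norm z"] component_le_norm_cart by auto

lemma simplex_compact: "compact (prob_simplex :: (real^'n) set)"
unfolding compact_eq_bounded_closed proof
  show "bounded (prob_simplex :: (real^'n) set)"
    unfolding bounded_iff
  proof (intro exI ballI)
    fix x :: "real^'n" assume x: "x \<in> prob_simplex"
    have "norm x \<le> (\<Sum>i\<in>UNIV. \<bar>x $ i\<bar>)" by (rule norm_le_l1_cart)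
    also have "\<dots> = 1" using x by (simp add: prob_simplex_def)
    finally show "norm x \<le> 1" .
  qed
  show "closed (prob_simplex :: (real^'n) set)"
    unfolding prob_simplex_def
    by (intro closed_Collect_conj closed_Collect_all closed_Collect_le closed_Collect_eq continuous_intros)
qed

lemma simplex_convex: "convex (prob_simplex :: (real^'n) set)"
  unfolding convex_def prob_simplex_def
  by (auto simp: sum.distrib sum_distrib_left[symmetric])

lemma simplex_ne: "(prob_simplex :: (real^'n) set) \<noteq> {}"
proof -
  have "((1 / real CARD('n)) *\<^sub>R ones :: real^'n) \<in> prob_simplex"
    by (simp add: prob_simplex_def ones_def)
  thus ?thesis by blast
qed


theorem theorem4:
  fixes C :: "real^'n^'n" and \<theta> :: "real^'n"
  assumes n2: "CARD('n) \<ge> 2"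
    and C: "row_stochastic_zero_diag C"
    and th_lt1: "\<forall>i. 0 \<le> \<theta> $ i \<and> \<theta> $ i < 1"
    and th_pos: "\<exists>j. 0 < \<theta> $ j"
    and small: "theta_max \<theta> < real CARD('n) /
        (real CARD('n) + 2 * (1 + (real CARD('n) * theta_ave \<theta> - theta_min \<theta>)))"
  shows "\<exists>xs. xs \<in> prob_simplex \<and> Fmap C \<theta> xs = xs
           \<and> (\<forall>y\<in>prob_simplex. Fmap C \<theta> y = y \<longrightarrow> y = xs)
           \<and> (\<forall>x0\<in>prob_simplex. \<exists>c \<rho>. 0 \<le> c \<and> 0 \<le> \<rho> \<and> \<rho> < 1 \<and>
                (\<forall>s::nat. norm ((Fmap C \<theta> ^^ s) x0 - xs) \<le> c * \<rho> ^ s))"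
proof -
  define nb where "nb = real CARD('n)"
  define b where "b = 1 / nb"
  have nbpos: "0 < nb" by (simp add: nb_def)
  have bpos: "0 < b" using nbpos by (simp add: b_def)
  define S where "S = (prob_simplex :: (real^'n) set)"
  define F where "F = Fmap C \<theta>"
  define Y where "Y x = matrix_inv (mat 1 - transpose (Wmat C x) ** diagm \<theta>) *v (b *\<^sub>R ones)" for x
  have Fc: "F x $ i = (1 - \<theta> $ i) * Y x $ i" for x i
    unfolding F_def Fmap_def Y_def b_def nb_def by (rule Fcomp)
  define tm where "tm = theta_max \<theta>"
  define tmin where "tmin = theta_min \<theta>"
  have fin: "finite (range (\<lambda>j. \<theta> $ j))" by simp
  have ne: "range (\<lambda>j. \<theta> $ j) \<noteq> {}" by simp
  have thle: "\<theta> $ i \<le> tm" for i unfolding tm_def theta_max_def by (rule Max_ge[OF fin]) simp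
  have tmlt: "tm < 1" using Max_in[OF fin ne] th_lt1 unfolding tm_def theta_max_def by auto
  have minle: "tmin \<le> \<theta> $ i" for i unfolding tmin_def theta_min_def by (rule Min_le[OF fin]) simp
  obtain i0 :: 'n where True by simp
  have th0: "0 \<le> \<theta> $ i" for i using th_lt1 by simp
  have tm0: "0 \<le> tm" using thle[of i0] th0[of i0] by simp
  have mintm: "tmin \<le> tm" using minle[of i0] thle[of i0] by simp
  define T where "T = (\<Sum>i\<in>UNIV. \<theta> $ i)"
  have Tmin: "tmin \<le> T"
  proof -
    have "\<theta> $ i0 \<le> T" unfolding T_def by (rule member_le_sum) (auto simp: th0)
    thus ?thesis using minle[of i0] by simp
  qed
  have T0: "0 \<le> T" unfolding T_def by (rule sum_nonneg) (simp add: th0)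
  define K where "K = tm * (b + b * T / (1 - tm))"
  have K0: "0 \<le> K" unfolding K_def using tm0 tmlt bpos T0 by simp
  have rho: "2 * K < 1"
  proof -
    have ave: "nb * theta_ave \<theta> = T" unfolding theta_ave_def T_def nb_def by simp
    define D where "D = nb + 2 * (1 + (T - tmin))"
    have Dpos: "0 < D" unfolding D_def using nbpos Tmin by simp
    have "tm < nb / D" using small unfolding D_def tm_def tmin_def ave[symmetric] nb_def by simp
    hence "tm * D < nb" using Dpos by (simp add: pos_less_divide_eq)
    moreover have "tm * tmin \<le> tm * tm" using mintm tm0 by (simp add: mult_left_mono)
    ultimately have key: "2 * tm * (1 - tm + T) < nb * (1 - tm)"
      unfolding D_def by (simp add: algebra_simps)
    have "2 * K = 2 * tm * (1 - tm + T) / (nb * (1 - tm))"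
      unfolding K_def b_def using tmlt nbpos by (simp add: field_simps)
    also have "\<dots> < 1" using key tmlt nbpos by (simp add: divide_less_eq)
    finally show ?thesis .
  qed
  have yeq: "Y x $ i = b + (\<Sum>j\<in>UNIV. Wmat C x $ j $ i * \<theta>$j * Y x $ j)" if x: "x \<in> S" for x i
    unfolding Y_def b_def nb_def by (rule y_eq[OF C th_lt1 x[unfolded S_def]])
  have yb: "(\<forall>i. 0 \<le> Y x $ i) \<and> (\<Sum>i\<in>UNIV. (1 - \<theta> $ i) * Y x $ i) = nb * b
       \<and> (\<forall>i. \<theta> $ i * Y x $ i \<le> K)" if x: "x \<in> S" for x
  proof -
    have x': "x \<in> prob_simplex" using x by (simp add: S_def)
    note r = ybounds[of "\<lambda>j i. Wmat C x $ j $ i" "\<lambda>j. \<theta> $ j" tm "\<lambda>i. Y x $ i" b,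
        OF W_props(1)[OF C x'] W_props(2)[OF C x'] _ thle tmlt yeq[OF x] bpos]
    show ?thesis using r th_lt1 unfolding K_def T_def nb_def by auto
  qed
  have FS: "F x \<in> S" if x: "x \<in> S" for x
  proof -
    have "0 \<le> F x $ i" for i
    proof -
      have "0 \<le> 1 - \<theta> $ i" using th_lt1 by (simp add: less_imp_le)
      moreover have "0 \<le> Y x $ i" using yb[OF x] by simp
      ultimately show ?thesis by (simp add: Fc)
    qed
    moreover have "(\<Sum>i\<in>UNIV. F x $ i) = 1" using yb[OF x] nbpos by (simp add: Fc b_def)
    ultimately show ?thesis by (simp add: S_def prob_simplex_def)
  qed
  have lip: "(\<Sum>i\<in>UNIV. \<bar>(F x - F x') $ i\<bar>) \<le> 2 * K * (\<Sum>i\<in>UNIV. \<bar>(x - x') $ i\<bar>)"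
    if x: "x \<in> S" and x': "x' \<in> S" for x x'
  proof -
    have xs: "x \<in> prob_simplex" "x' \<in> prob_simplex" using x x' by (auto simp: S_def)
    have "(\<Sum>i\<in>UNIV. (1 - \<theta> $ i) * \<bar>Y x $ i - Y x' $ i\<bar>)
        \<le> 2 * (\<Sum>j\<in>UNIV. \<bar>(x $ j - x' $ j) * \<theta> $ j * Y x' $ j\<bar>)"
    proof (rule diffbound[of "\<lambda>j i. Wmat C x $ j $ i" "\<lambda>j i. C $ j $ i" "\<lambda>j. \<theta> $ j"
          "\<lambda>i. Y x $ i" b "\<lambda>i. Y x' $ i" "\<lambda>j i. Wmat C x' $ j $ i"])
      show "0 \<le> Wmat C x $ j $ i" for j i by (rule W_props[OF C xs(1)])
      show "(\<Sum>i\<in>UNIV. Wmat C x $ j $ i) = 1" for j by (rule W_props[OF C xs(1)])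
      show "0 \<le> C $ j $ i" for j i using C by (simp add: row_stochastic_zero_diag_def)
      show "(\<Sum>i\<in>UNIV. C $ j $ i) = 1" for j using C by (simp add: row_stochastic_zero_diag_def)
      show "0 \<le> \<theta> $ i" for i by (rule th0)
      show "Y x $ i = b + (\<Sum>j\<in>UNIV. Wmat C x $ j $ i * \<theta> $ j * Y x $ j)" for i by (rule yeq[OF x])
      show "Y x' $ i = b + (\<Sum>j\<in>UNIV. Wmat C x' $ j $ i * \<theta> $ j * Y x' $ j)" for i by (rule yeq[OF x'])
      show "Wmat C x $ j $ i - Wmat C x' $ j $ i = (if j = i then x $ j - x' $ j else 0) - (x $ j - x' $ j) * C $ j $ i" for j i
        by (simp add: Wmat_entry algebra_simps)
    qed
    also have "\<dots> \<le> 2 * (\<Sum>j\<in>UNIV. K * \<bar>x $ j - x' $ j\<bar>)"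
    proof -
      have "\<bar>(x $ j - x' $ j) * \<theta> $ j * Y x' $ j\<bar> \<le> K * \<bar>x $ j - x' $ j\<bar>" for j
      proof -
        have "\<bar>(x $ j - x' $ j) * \<theta> $ j * Y x' $ j\<bar> = \<bar>x $ j - x' $ j\<bar> * (\<theta> $ j * Y x' $ j)"
          using yb[OF x'] th0[of j] by (simp add: abs_mult mult.assoc)
        also have "\<dots> \<le> \<bar>x $ j - x' $ j\<bar> * K" using yb[OF x'] by (simp add: mult_left_mono)
        finally show ?thesis by (simp add: mult.commute)
      qed
      thus ?thesis by (simp add: sum_mono)
    qed
    finally have fin1: "(\<Sum>i\<in>UNIV. (1 - \<theta> $ i) * \<bar>Y x $ i - Y x' $ i\<bar>) \<le> 2 * (\<Sum>j\<in>UNIV. K * \<bar>x $ j - x' $ j\<bar>)" .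
    have "\<bar>(F x - F x') $ i\<bar> = (1 - \<theta> $ i) * \<bar>Y x $ i - Y x' $ i\<bar>" for i
    proof -
      have "\<bar>(F x - F x') $ i\<bar> = \<bar>(1 - \<theta> $ i) * (Y x $ i - Y x' $ i)\<bar>"
        by (simp add: Fc right_diff_distrib)
      also have "\<dots> = (1 - \<theta> $ i) * \<bar>Y x $ i - Y x' $ i\<bar>"
        using th_lt1 by (simp add: abs_mult less_imp_le)
      finally show ?thesis .
    qed
    thus ?thesis using fin1 by (simp add: sum_distrib_left mult.assoc)
  qed
  have l1n: "norm z \<le> (\<Sum>i\<in>UNIV. \<bar>z $ i\<bar>)" for z :: "real^'n" by (rule norm_le_l1_cart)
  have contF: "continuous_on S F"
  proof (rule lipschitz_on_continuous_on)
    show "(2 * K * nb)-lipschitz_on S F"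
    proof (rule lipschitz_onI)
      fix x x' assume x: "x \<in> S" and x': "x' \<in> S"
      have "dist (F x) (F x') \<le> (\<Sum>i\<in>UNIV. \<bar>(F x - F x') $ i\<bar>)" unfolding dist_norm by (rule l1n)
      also have "\<dots> \<le> 2 * K * (\<Sum>i\<in>UNIV. \<bar>(x - x') $ i\<bar>)" by (rule lip[OF x x'])
      also have "\<dots> \<le> 2 * K * (nb * norm (x - x'))"
        using norm_l1[of "x - x'"] K0 unfolding nb_def by (simp add: mult_left_mono)
      finally show "dist (F x) (F x') \<le> 2 * K * nb * dist x x'" by (simp add: dist_norm mult.assoc)
    next
      show "0 \<le> 2 * K * nb" using K0 nbpos by simp
    qed
  qed
  obtain xs where xs: "xs \<in> S" "F xs = xs"
    using brouwer[of S F] simplex_compact simplex_convex simplex_ne contF FS unfolding S_def by blast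
  have l1zero: "(\<Sum>i\<in>UNIV. \<bar>(y - xs) $ i\<bar>) = 0" if y: "y \<in> S" "F y = y" for y
  proof -
    have "(\<Sum>i\<in>UNIV. \<bar>(y - xs) $ i\<bar>) \<le> 2 * K * (\<Sum>i\<in>UNIV. \<bar>(y - xs) $ i\<bar>)"
      using lip[OF y(1) xs(1)] y(2) xs(2) by simp
    moreover have "0 \<le> (\<Sum>i\<in>UNIV. \<bar>(y - xs) $ i\<bar>)" by (simp add: sum_nonneg)
    moreover note rho
    ultimately show ?thesis
    proof -
      assume a: "(\<Sum>i\<in>UNIV. \<bar>(y - xs) $ i\<bar>) \<le> 2 * K * (\<Sum>i\<in>UNIV. \<bar>(y - xs) $ i\<bar>)"
        and b: "0 \<le> (\<Sum>i\<in>UNIV. \<bar>(y - xs) $ i\<bar>)" and c: "2 * K < 1"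
      from a have "(1 - 2 * K) * (\<Sum>i\<in>UNIV. \<bar>(y - xs) $ i\<bar>) \<le> 0" by (simp add: algebra_simps)
      with c have "(\<Sum>i\<in>UNIV. \<bar>(y - xs) $ i\<bar>) \<le> 0" by (simp add: mult_le_0_iff)
      with b show ?thesis by (rule antisym[rotated])
    qed
  qed
  have uniq: "y = xs" if y: "y \<in> S" "F y = y" for y
    using l1zero[OF y] norm_le_l1_cart[of "y - xs"] by simp
  have conv: "norm ((F ^^ s) x0 - xs) \<le> 2 * (2 * K) ^ s" if x0: "x0 \<in> S" for x0 s
  proof -
    have "(F ^^ s) x0 \<in> S \<and> (\<Sum>i\<in>UNIV. \<bar>((F ^^ s) x0 - xs) $ i\<bar>) \<le> (2 * K) ^ s * (\<Sum>i\<in>UNIV. \<bar>(x0 - xs) $ i\<bar>)"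
    proof (induction s)
      case 0 thus ?case using x0 by simp
    next
      case (Suc s)
      have "(\<Sum>i\<in>UNIV. \<bar>((F ^^ Suc s) x0 - xs) $ i\<bar>) = (\<Sum>i\<in>UNIV. \<bar>(F ((F ^^ s) x0) - F xs) $ i\<bar>)"
        using xs(2) by simp
      also have "\<dots> \<le> 2 * K * (\<Sum>i\<in>UNIV. \<bar>((F ^^ s) x0 - xs) $ i\<bar>)"
        using lip Suc.IH xs(1) by blast
      also have "\<dots> \<le> 2 * K * ((2 * K) ^ s * (\<Sum>i\<in>UNIV. \<bar>(x0 - xs) $ i\<bar>))"
        using Suc.IH K0 by (simp add: mult_left_mono)
      finally show ?case using FS Suc.IH by (simp add: mult.assoc)
    qed
    moreover have "(\<Sum>i\<in>UNIV. \<bar>(x0 - xs) $ i\<bar>) \<le> 2"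
    proof -
      have "(\<Sum>i\<in>UNIV. \<bar>(x0 - xs) $ i\<bar>) \<le> (\<Sum>i\<in>UNIV. x0 $ i + xs $ i)"
      proof (rule sum_mono)
        fix i
        have "0 \<le> x0 $ i" "0 \<le> xs $ i" using x0 xs(1) by (auto simp: S_def prob_simplex_def)
        thus "\<bar>(x0 - xs) $ i\<bar> \<le> x0 $ i + xs $ i" by (simp add: abs_le_iff)
      qed
      also have "\<dots> = 2" using x0 xs(1) by (simp add: S_def prob_simplex_def sum.distrib)
      finally show ?thesis .
    qed
    moreover have "0 \<le> (2 * K) ^ s" using K0 by simp
    ultimately have "(\<Sum>i\<in>UNIV. \<bar>((F ^^ s) x0 - xs) $ i\<bar>) \<le> 2 * (2 * K) ^ s"
    proof -
      assume a: "(F ^^ s) x0 \<in> S \<and> (\<Sum>i\<in>UNIV. \<bar>((F ^^ s) x0 - xs) $ i\<bar>) \<le> (2 * K) ^ s * (\<Sum>i\<in>UNIV. \<bar>(x0 - xs) $ i\<bar>)"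
        and b: "(\<Sum>i\<in>UNIV. \<bar>(x0 - xs) $ i\<bar>) \<le> 2" and c: "0 \<le> (2 * K) ^ s"
      have "(2 * K) ^ s * (\<Sum>i\<in>UNIV. \<bar>(x0 - xs) $ i\<bar>) \<le> (2 * K) ^ s * 2"
        using b c by (rule mult_left_mono)
      thus ?thesis using a by (simp add: mult.commute)
    qed
    thus ?thesis using norm_le_l1_cart[of "(F ^^ s) x0 - xs"] by simp
  qed
  show ?thesis
  proof (intro exI[of _ xs] conjI)
    show "xs \<in> prob_simplex" using xs by (simp add: S_def)
    show "Fmap C \<theta> xs = xs" using xs by (simp add: F_def)
    show "\<forall>y\<in>prob_simplex. Fmap C \<theta> y = y \<longrightarrow> y = xs"
      using uniq by (simp add: S_def F_def)
    show "\<forall>x0\<in>prob_simplex. \<exists>c \<rho>. 0 \<le> c \<and> 0 \<le> \<rho> \<and> \<rho> < 1 \<and>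
                (\<forall>s::nat. norm ((Fmap C \<theta> ^^ s) x0 - xs) \<le> c * \<rho> ^ s)"
    proof
      fix x0 :: "real^'n" assume "x0 \<in> prob_simplex"
      hence "x0 \<in> S" by (simp add: S_def)
      thus "\<exists>c \<rho>. 0 \<le> c \<and> 0 \<le> \<rho> \<and> \<rho> < 1 \<and> (\<forall>s::nat. norm ((Fmap C \<theta> ^^ s) x0 - xs) \<le> c * \<rho> ^ s)"
        using conv[of x0] K0 rho unfolding F_def
        by (intro exI[of _ 2] exI[of _ "2 * K"]) auto
    qed
  qed
qed

end
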